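(* Let $X\in\mathbb R^{T\times K}$ have full column rank $K<T$ and let $\Gamma\in\mathbb R^{T\times T}$ satisfy $\|\Gamma\|<1-c$ for a constant $c\in(0,1)$. Then: (i) the matrices $I_T-\Gamma$, $I_T-P\Gamma$, $X'(I_T-\Gamma)X$ and $I_T+A_\Gamma M$ are invertible, where $A_\Gamma=(I_T-\Gamma)^{-1}\Gamma$; (ii) the following identities hold: $(I_T-\Gamma)M_\Gamma=M(I_T+A_\Gamma M)^{-1}$; $P_\Gamma=(I_T-P\Gamma)^{-1}P(I_T-\Gamma)$; $M_\Gamma=(I_T-P\Gamma)^{-1}M$; and for every $y\in\mathbb R^T$, $(X'(I_T-\Gamma)X)^{-1}X'(I_T-\Gamma)y=(X'X)^{-1}X'(I_T+A_\Gamma M)^{-1}y$; (iii) the matrix $(I_T-\Gamma)M_\Gamma+M_\Gamma'(I_T-\Gamma')$ is positive semi-definite, and there are constants $0<c'<C'$ depending only on $c$ such that $c'<\frac{T-K_\Gamma}{T-K}<C'$, where $T-K_\Gamma:=\operatorname{tr}[(I_T-\Gamma)M_\Gamma]$.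
   Context: $\|\cdot\|$ is the operator norm. $P=X(X'X)^{-1}X'$, $M=I_T-P$, $P_\Gamma=X(X'(I_T-\Gamma)X)^{-1}X'(I_T-\Gamma)$, $M_\Gamma=I_T-P_\Gamma$. *)

theory Defs
  imports "Jordan_Normal_Form.DL_Rank"
begin

definition mat_inv :: "real mat \<Rightarrow> real mat" where
  "mat_inv A = (SOME B. B \<in> carrier_mat (dim_row A) (dim_row A) \<and>
       A * B = 1\<^sub>m (dim_row A) \<and> B * A = 1\<^sub>m (dim_row A))"

definition mat_trace :: "real mat \<Rightarrow> real" where
  "mat_trace A = (\<Sum>i<dim_row A. A $$ (i, i))"

definition vec_norm :: "real vec \<Rightarrow> real" where
  "vec_norm v = sqrt (v \<bullet> v)"

definition op_norm :: "real mat \<Rightarrow> real" where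
  "op_norm A = Sup {vec_norm (A *\<^sub>v v) | v. v \<in> carrier_vec (dim_col A) \<and> vec_norm v = 1}"

definition psd :: "real mat \<Rightarrow> bool" where
  "psd A \<longleftrightarrow> square_mat A \<and> (\<forall>v \<in> carrier_vec (dim_row A). v \<bullet> (A *\<^sub>v v) \<ge> 0)"

definition full_col_rank :: "real mat \<Rightarrow> bool" where
  "full_col_rank X \<longleftrightarrow> vec_space.rank (dim_row X) (X::real mat) = dim_col X"

definition projP :: "real mat \<Rightarrow> real mat" where
  "projP X = X * mat_inv (X\<^sup>T * X) * X\<^sup>T"

definition projM :: "real mat \<Rightarrow> real mat" where
  "projM X = 1\<^sub>m (dim_row X) - projP X"

definition projPG :: "real mat \<Rightarrow> real mat \<Rightarrow> real mat" where
  "projPG X G = X * mat_inv (X\<^sup>T * (1\<^sub>m (dim_row X) - G) * X) * X\<^sup>T * (1\<^sub>m (dim_row X) - G)"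

definition projMG :: "real mat \<Rightarrow> real mat \<Rightarrow> real mat" where
  "projMG X G = 1\<^sub>m (dim_row X) - projPG X G"

definition AG :: "real mat \<Rightarrow> real mat" where
  "AG G = mat_inv (1\<^sub>m (dim_row G) - G) * G"

end

theory Submission
  imports Defs
begin


lemma inv_unique:
  fixes A B :: "real mat"
  assumes A: "A \<in> carrier_mat n n" and B: "B \<in> carrier_mat n n" and AB: "A * B = 1\<^sub>m n"
  shows "invertible_mat A \<and> mat_inv A = B \<and> B * A = 1\<^sub>m n"
proof -
  have BA: "B * A = 1\<^sub>m n" using mat_mult_left_right_inverse[OF A B AB] .
  have inv: "invertible_mat A" unfolding invertible_mat_def inverts_mat_def
    using A B AB BA by (intro conjI exI[of _ B]) auto
  have ex: "B \<in> carrier_mat (dim_row A) (dim_row A) \<and> A * B = 1\<^sub>m (dim_row A) \<and> B * A = 1\<^sub>m (dim_row A)"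
    using A B AB BA by auto
  define C where "C = mat_inv A"
  have C: "C \<in> carrier_mat n n" "A * C = 1\<^sub>m n" "C * A = 1\<^sub>m n"
    using someI[of "\<lambda>B. B \<in> carrier_mat (dim_row A) (dim_row A) \<and> A * B = 1\<^sub>m (dim_row A) \<and> B * A = 1\<^sub>m (dim_row A)", OF ex]
    A unfolding C_def mat_inv_def by auto
  have "C = C * (A * B)" using C AB by simp
  also have "\<dots> = (C * A) * B" by (rule assoc_mult_mat[symmetric, OF C(1) A B])
  also have "\<dots> = B" unfolding C(3) using B by simp
  finally show ?thesis using inv BA C_def by auto
qed

lemma ker_inv:
  fixes A :: "real mat"
  assumes A: "A \<in> carrier_mat n n"
    and ker: "\<And>v. v \<in> carrier_vec n \<Longrightarrow> A *\<^sub>v v = 0\<^sub>v n \<Longrightarrow> v = 0\<^sub>v n"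
  shows "invertible_mat A \<and> mat_inv A \<in> carrier_mat n n \<and> A * mat_inv A = 1\<^sub>m n \<and> mat_inv A * A = 1\<^sub>m n"
proof -
  have "det A \<noteq> 0" using det_0_iff_vec_prod_zero_field[OF A] ker by auto
  from det_non_zero_imp_unit[OF A this, of "()"]
  obtain B where B: "B \<in> carrier_mat n n" "A * B = 1\<^sub>m n"
    unfolding Units_def ring_mat_def by auto
  from inv_unique[OF A B] B show ?thesis by auto
qed



lemma sp_self_ge0: "(v::real vec) \<bullet> v \<ge> 0"
  unfolding scalar_prod_def by (auto intro: sum_nonneg)

lemma sp_self_eq0: assumes v: "(v::real vec) \<in> carrier_vec n" and z: "v \<bullet> v = 0" shows "v = 0\<^sub>v n"
proof (rule eq_vecI)
  show "dim_vec v = dim_vec (0\<^sub>v n)" using v by auto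
  fix i assume i: "i < dim_vec (0\<^sub>v n)"
  have "(\<Sum>j\<in>{0..<dim_vec v}. v $ j * v $ j) = 0" using z unfolding scalar_prod_def by simp
  hence "\<forall>j\<in>{0..<dim_vec v}. v $ j * v $ j = 0"
    by (subst sum_nonneg_eq_0_iff[symmetric]) auto
  thus "v $ i = 0\<^sub>v n $ i" using i v by auto
qed

lemma ipbound:
  fixes u w :: "real vec"
  assumes u: "u \<in> carrier_vec n" and w: "w \<in> carrier_vec n" and k: "k > 0"
    and b: "w \<bullet> w \<le> k^2 * (u \<bullet> u)"
  shows "u \<bullet> w \<le> k * (u \<bullet> u) \<and> - (u \<bullet> w) \<le> k * (u \<bullet> u)"
proof -
  have e1: "(\<Sum>i<n. (k * u$i - w$i)^2) = k^2*(u \<bullet> u) - 2*k*(u \<bullet> w) + w \<bullet> w"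
    using u w unfolding scalar_prod_def
    by (simp add: power2_eq_square algebra_simps sum.distrib sum_subtractf sum_distrib_left atLeast0LessThan)
  have e2: "(\<Sum>i<n. (k * u$i + w$i)^2) = k^2*(u \<bullet> u) + 2*k*(u \<bullet> w) + w \<bullet> w"
    using u w unfolding scalar_prod_def
    by (simp add: power2_eq_square algebra_simps sum.distrib sum_subtractf sum_distrib_left atLeast0LessThan)
  have "0 \<le> (\<Sum>i<n. (k * u$i - w$i)^2)" by (auto intro: sum_nonneg)
  hence "2*k*(u \<bullet> w) \<le> 2*k*(k*(u \<bullet> u))" using e1 b by (simp add: power2_eq_square algebra_simps)
  hence 1: "u \<bullet> w \<le> k * (u \<bullet> u)" using k by simp
  have "0 \<le> (\<Sum>i<n. (k * u$i + w$i)^2)" by (auto intro: sum_nonneg)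
  hence "2*k*(-(u \<bullet> w)) \<le> 2*k*(k*(u \<bullet> u))" using e2 b by (simp add: power2_eq_square algebra_simps)
  hence 2: "-(u \<bullet> w) \<le> k * (u \<bullet> u)" using k mult_le_cancel_left_pos[of k "-(u \<bullet> w)" "k*(u \<bullet> u)"] by simp
  show ?thesis using 1 2 by auto
qed

lemma trace_comm:
  fixes A B :: "real mat"
  assumes A: "A \<in> carrier_mat n m" and B: "B \<in> carrier_mat m n"
  shows "mat_trace (A * B) = mat_trace (B * A)"
proof -
  have "mat_trace (A * B) = (\<Sum>i<n. \<Sum>j<m. A $$ (i,j) * B $$ (j,i))"
    unfolding mat_trace_def using A B
    by (auto simp: scalar_prod_def atLeast0LessThan intro!: sum.cong)
  also have "\<dots> = (\<Sum>j<m. \<Sum>i<n. B $$ (j,i) * A $$ (i,j))"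
    by (subst sum.swap) (simp add: mult.commute)
  also have "\<dots> = mat_trace (B * A)"
    unfolding mat_trace_def using A B
    by (auto simp: scalar_prod_def atLeast0LessThan intro!: sum.cong)
  finally show ?thesis .
qed

lemma fullrank_inj:
  fixes X :: "real mat"
  assumes X: "X \<in> carrier_mat T K" and fr: "full_col_rank X"
    and b: "b \<in> carrier_vec K" and Xb: "X *\<^sub>v b = 0\<^sub>v T"
  shows "b = 0\<^sub>v K"
proof (rule ccontr)
  assume nz: "b \<noteq> 0\<^sub>v K"
  interpret vec_space "TYPE(real)" T .
  have rk: "rank X = K" using fr X unfolding full_col_rank_def by auto
  show False
  proof (cases "distinct (cols X)")
    case True
    have "lin_indpt (set (cols X))" using full_rank_lin_indpt[OF X rk True] .
    moreover have "lin_dep (set (cols X))" using lin_depI[OF X b nz Xb True] .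
    ultimately show False by simp
  next
    case False
    obtain S where "maximal S (\<lambda>T. T \<subseteq> set (cols X) \<and> lin_indpt T)"
      using maximal_exists[of "(\<lambda>T. T \<subseteq> set (cols X) \<and> lin_indpt T)" "card (set (cols X))" "{}"]
      by (meson List.finite_set card_mono empty_iff empty_subsetI finite_lin_indpt2 rev_finite_subset)
    note m = this
    then have "card S \<le> card (set (cols X))" by (simp add: card_mono maximal_def)
    also have "card (set (cols X)) < length (cols X)"
      using False card_distinct card_length le_neq_implies_less by blast
    finally have "card S < K" using X by simp
    then show False using rank_card_indpt[OF X m] rk by simp
  qed
qed



lemma unit_bound:
  fixes G :: "real mat"
  assumes G: "G \<in> carrier_mat n n" and u: "u \<in> carrier_vec n" and uu: "vec_norm u = 1"
  shows "vec_norm (G *\<^sub>v u) \<le> (\<Sum>i<n. \<Sum>j<n. \<bar>G $$ (i,j)\<bar>)"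
proof -
  have u1: "u \<bullet> u = 1" using uu unfolding vec_norm_def by simp
  have uj: "\<bar>u $ j\<bar> \<le> 1" if j: "j < n" for j
  proof -
    have "u$j * u$j \<le> (\<Sum>i\<in>{0..<n}. u$i * u$i)"
      by (rule member_le_sum[of j]) (use j in auto)
    also have "\<dots> = 1" using u1 u unfolding scalar_prod_def by simp
    finally have "(u$j)^2 \<le> 1" by (simp add: power2_eq_square)
    thus ?thesis by (simp add: abs_square_le_1)
  qed
  define w where "w = G *\<^sub>v u"
  have w: "w \<in> carrier_vec n" using G u w_def by auto
  have wi: "\<bar>w $ i\<bar> \<le> (\<Sum>j<n. \<bar>G $$ (i,j)\<bar>)" if i: "i < n" for i
  proof -
    have "w $ i = (\<Sum>j<n. G $$ (i,j) * u $ j)"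
      unfolding w_def using G u i by (simp add: scalar_prod_def atLeast0LessThan)
    also have "\<bar>\<dots>\<bar> \<le> (\<Sum>j<n. \<bar>G $$ (i,j) * u $ j\<bar>)" by (rule sum_abs)
    also have "\<dots> \<le> (\<Sum>j<n. \<bar>G $$ (i,j)\<bar>)"
    proof (rule sum_mono)
      fix j assume "j \<in> {..<n}"
      thus "\<bar>G $$ (i,j) * u $ j\<bar> \<le> \<bar>G $$ (i,j)\<bar>" using uj[of j]
        by (simp add: abs_mult mult_left_le)
    qed
    finally show ?thesis .
  qed
  define W where "W = (\<Sum>i<n. \<bar>w $ i\<bar>)"
  have W0: "W \<ge> 0" unfolding W_def by (auto intro: sum_nonneg)
  have WB: "W \<le> (\<Sum>i<n. \<Sum>j<n. \<bar>G $$ (i,j)\<bar>)" unfolding W_def by (rule sum_mono) (use wi in auto)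
  have "w \<bullet> w = (\<Sum>i<n. w$i * w$i)" using w unfolding scalar_prod_def by (simp add: atLeast0LessThan)
  also have "\<dots> \<le> (\<Sum>i<n. \<bar>w$i\<bar> * W)"
  proof (rule sum_mono)
    fix i assume i: "i \<in> {..<n}"
    have "\<bar>w$i\<bar> \<le> W" unfolding W_def by (rule member_le_sum) (use i in auto)
    hence "\<bar>w$i\<bar> * \<bar>w$i\<bar> \<le> \<bar>w$i\<bar> * W" by (intro mult_left_mono) auto
    thus "w$i * w$i \<le> \<bar>w$i\<bar> * W" by (simp add: abs_mult_self_eq)
  qed
  also have "\<dots> = W * W" unfolding W_def by (simp add: sum_distrib_right)
  finally have "w \<bullet> w \<le> W^2" by (simp add: power2_eq_square)
  hence "vec_norm w \<le> W" unfolding vec_norm_def using W0 real_sqrt_le_iff[of "w \<bullet> w" "W^2"] by simp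
  thus ?thesis using WB w_def by simp
qed

lemma opnorm_bound:
  fixes G :: "real mat"
  assumes G: "G \<in> carrier_mat n n" and r: "op_norm G < r" and v: "v \<in> carrier_vec n"
  shows "(G *\<^sub>v v) \<bullet> (G *\<^sub>v v) \<le> r^2 * (v \<bullet> v)"
proof (cases "v \<bullet> v = 0")
  case True
  hence "v = 0\<^sub>v n" using sp_self_eq0[OF v] by simp
  moreover have "G *\<^sub>v 0\<^sub>v n = 0\<^sub>v n" using G by (intro eq_vecI) auto
  ultimately show ?thesis by simp
next
  case False
  let ?S = "{vec_norm (G *\<^sub>v v) | v. v \<in> carrier_vec (dim_col G) \<and> vec_norm v = 1}"
  have bdd: "bdd_above ?S"
    unfolding bdd_above_def using unit_bound[OF G] G by blast
  have vv: "v \<bullet> v > 0" using False sp_self_ge0[of v] by simp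
  define s where "s = sqrt (v \<bullet> v)"
  have s: "s > 0" using vv s_def by simp
  have ss: "s * s = v \<bullet> v" using vv s_def by (simp add: real_sqrt_mult[symmetric])
  define u where "u = (1/s) \<cdot>\<^sub>v v"
  have u: "u \<in> carrier_vec n" using v u_def by simp
  have "u \<bullet> u = (1/s) * ((1/s) * (v \<bullet> v))" unfolding u_def using v by simp
  also have "\<dots> = 1" using ss s vv by (simp add: field_simps)
  finally have un: "vec_norm u = 1" unfolding vec_norm_def by simp
  have "vec_norm (G *\<^sub>v u) \<in> ?S" using u un G by blast
  hence "vec_norm (G *\<^sub>v u) \<le> op_norm G" unfolding op_norm_def using bdd by (rule cSup_upper)
  hence lt: "vec_norm (G *\<^sub>v u) < r" using r by simp
  have Gu: "G *\<^sub>v u = (1/s) \<cdot>\<^sub>v (G *\<^sub>v v)" unfolding u_def using mult_mat_vec[OF G v] .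
  define g where "g = (G *\<^sub>v v) \<bullet> (G *\<^sub>v v)"
  have g0: "g \<ge> 0" unfolding g_def by (rule sp_self_ge0)
  have "(G *\<^sub>v u) \<bullet> (G *\<^sub>v u) = (1/s) * ((1/s) * g)" unfolding Gu g_def using G v by simp
  hence "(G *\<^sub>v u) \<bullet> (G *\<^sub>v u) = g / (s * s)" by simp
  hence "vec_norm (G *\<^sub>v u) = sqrt g / s" unfolding vec_norm_def using s
    by (simp add: real_sqrt_divide real_sqrt_mult_self)
  hence "sqrt g = s * vec_norm (G *\<^sub>v u)" using s by (simp add: field_simps)
  hence "sqrt g < r * s" using lt s mult_strict_left_mono[OF lt s] by (simp add: mult.commute)
  hence "(sqrt g)^2 < (r*s)^2" using g0 by (intro power_strict_mono) auto
  hence "g < r^2 * (s * s)" using g0 by (simp add: power_mult_distrib power2_eq_square mult_ac)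
  thus ?thesis unfolding g_def ss by simp
qed



lemma assoc': fixes A B C :: "real mat"
  shows "dim_col A = dim_row B \<Longrightarrow> dim_col B = dim_row C \<Longrightarrow> (A*B)*C = A*(B*C)"
  by (rule assoc_mult_mat[of A "dim_row A" "dim_col A" B "dim_col B" C "dim_col C"]) auto

lemma md1: fixes A B C :: "real mat"
  shows "dim_col A = dim_row C \<Longrightarrow> dim_row B = dim_row C \<Longrightarrow> dim_col B = dim_col C \<Longrightarrow> A*(B - C) = A*B - A*C"
  by (rule mult_minus_distrib_mat[of A "dim_row A" "dim_col A" B "dim_col B"]) auto

lemma md2: fixes A B C :: "real mat"
  shows "dim_row A = dim_row B \<Longrightarrow> dim_col A = dim_col B \<Longrightarrow> dim_col B = dim_row C \<Longrightarrow> (A - B)*C = A*C - B*C"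
  by (rule minus_mult_distrib_mat[of A "dim_row A" "dim_col A" B C "dim_col C"]) auto

lemma pd1: fixes A B C :: "real mat"
  shows "dim_col A = dim_row C \<Longrightarrow> dim_row B = dim_row C \<Longrightarrow> dim_col B = dim_col C \<Longrightarrow> A*(B + C) = A*B + A*C"
  by (rule mult_add_distrib_mat[of A "dim_row A" "dim_col A" B "dim_col B"]) auto

lemma pd2: fixes A B C :: "real mat"
  shows "dim_row A = dim_row B \<Longrightarrow> dim_col A = dim_col B \<Longrightarrow> dim_col B = dim_row C \<Longrightarrow> (A + B)*C = A*C + B*C"
  by (rule add_mult_distrib_mat[of A "dim_row A" "dim_col A" B C "dim_col C"]) auto

lemma mv_assoc': fixes A B :: "real mat"
  shows "dim_col A = dim_row B \<Longrightarrow> dim_vec v = dim_col B \<Longrightarrow> (A*B) *\<^sub>v v = A *\<^sub>v (B *\<^sub>v v)"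
proof -
  assume a: "dim_col A = dim_row B" "dim_vec v = dim_col B"
  have v: "v \<in> carrier_vec (dim_col B)" by (rule carrier_vecI) (rule a(2))
  show ?thesis by (rule assoc_mult_mat_vec[OF _ _ v, of A "dim_row A" "dim_col A" B]) (use a in auto)
qed

lemmas msimps = assoc' md1 md2 pd1 pd2 mv_assoc'



locale thm9 =
  fixes T K :: nat and X G :: "real mat" and c :: real
  assumes X: "X \<in> carrier_mat T K" and fr: "full_col_rank X" and KT: "K < T"
    and G: "G \<in> carrier_mat T T" and opn: "op_norm G < 1 - c" and c0: "0 < c" and c1: "c < 1"
begin

definition "Xt = transpose_mat X"
definition "Si = mat_inv (Xt * X)"
definition "P = projP X"
definition "M = projM X"

lemma Xt: "Xt \<in> carrier_mat K T" unfolding Xt_def using X by auto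
lemma dX[simp]: "dim_row X = T" "dim_col X = K" using X by auto
lemma dXt[simp]: "dim_row Xt = K" "dim_col Xt = T" using Xt by auto
lemma dG[simp]: "dim_row G = T" "dim_col G = T" using G by auto

lemma r0: "0 < 1 - c" using c1 by simp

lemma Gb: "v \<in> carrier_vec T \<Longrightarrow> (G *\<^sub>v v) \<bullet> (G *\<^sub>v v) \<le> (1-c)^2 * (v \<bullet> v)"
  using opnorm_bound[OF G opn] .

lemma Gq: assumes v: "v \<in> carrier_vec T"
  shows "v \<bullet> (G *\<^sub>v v) \<le> (1-c) * (v \<bullet> v) \<and> - (v \<bullet> (G *\<^sub>v v)) \<le> (1-c) * (v \<bullet> v)"
  using ipbound[OF v _ r0 Gb[OF v]] G v by auto

lemma Xinj: "b \<in> carrier_vec K \<Longrightarrow> X *\<^sub>v b = 0\<^sub>v T \<Longrightarrow> b = 0\<^sub>v K"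
  using fullrank_inj[OF X fr] by auto

lemma tsym: fixes A :: "real mat" assumes A: "A \<in> carrier_mat n m" and x: "x \<in> carrier_vec m" and y: "y \<in> carrier_vec n"
  shows "y \<bullet> (A *\<^sub>v x) = (transpose_mat A *\<^sub>v y) \<bullet> x"
  using transpose_vec_mult_scalar[OF A x y] by simp

lemma XtX: "Xt * X \<in> carrier_mat K K" using X Xt by simp

lemma XtX_inv: "invertible_mat (Xt * X) \<and> Si \<in> carrier_mat K K \<and> (Xt * X) * Si = 1\<^sub>m K \<and> Si * (Xt * X) = 1\<^sub>m K"
proof -
  have "v = 0\<^sub>v K" if v: "v \<in> carrier_vec K" and z: "(Xt * X) *\<^sub>v v = 0\<^sub>v K" for v
  proof -
    have "0 = v \<bullet> ((Xt * X) *\<^sub>v v)" using z v by simp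
    also have "\<dots> = v \<bullet> (Xt *\<^sub>v (X *\<^sub>v v))" using Xt X v by simp
    also have "\<dots> = (X *\<^sub>v v) \<bullet> (X *\<^sub>v v)"
      using tsym[OF Xt, of "X *\<^sub>v v" v] X v unfolding Xt_def by simp
    finally have "X *\<^sub>v v = 0\<^sub>v T" using sp_self_eq0[of "X *\<^sub>v v" T] X v by simp
    thus ?thesis using Xinj v by simp
  qed
  thus ?thesis using ker_inv[OF XtX] unfolding Si_def by blast
qed

lemma Si: "Si \<in> carrier_mat K K" using XtX_inv by simp
lemma dSi[simp]: "dim_row Si = K" "dim_col Si = K" using Si by auto

lemma Si_sym: "transpose_mat Si = Si"
proof -
  have "transpose_mat ((Xt * X) * Si) = 1\<^sub>m K" using XtX_inv by simp
  hence "transpose_mat Si * transpose_mat (Xt * X) = 1\<^sub>m K"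
    using transpose_mult[OF XtX Si] by simp
  moreover have "transpose_mat (Xt * X) = Xt * X"
    using transpose_mult[OF Xt X] unfolding Xt_def by simp
  ultimately have "transpose_mat Si * (Xt * X) = 1\<^sub>m K" by simp
  hence "(Xt * X) * transpose_mat Si = 1\<^sub>m K"
    using mat_mult_left_right_inverse[of "transpose_mat Si" K "Xt * X"] Si XtX by auto
  hence "mat_inv (Xt * X) = transpose_mat Si" using inv_unique[OF XtX, of "transpose_mat Si"] Si by auto
  thus ?thesis unfolding Si_def by simp
qed

lemma P_def': "P = X * (Si * Xt)"
  unfolding P_def projP_def Si_def[symmetric] Xt_def[symmetric] using X Si Xt by simp

lemma P: "P \<in> carrier_mat T T" unfolding P_def' using X Si Xt by simp
lemma M_def': "M = 1\<^sub>m T - P" unfolding M_def projM_def P_def using X by simp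
lemma dP[simp]: "dim_row P = T" "dim_col P = T" using P by auto
lemma M: "M \<in> carrier_mat T T" unfolding M_def' using P by (simp add: minus_carrier_mat)
lemma dM[simp]: "dim_row M = T" "dim_col M = T" using M by auto

lemma XtXSi: "Xt * (X * Si) = 1\<^sub>m K" using XtX_inv X Xt Si by simp
lemma SiXtX: "Si * (Xt * X) = 1\<^sub>m K" using XtX_inv by simp

lemma PX: "P * X = X"
proof -
  have "P * X = X * (Si * (Xt * X))" unfolding P_def' by (simp add: msimps)
  thus ?thesis using SiXtX X by simp
qed

lemma XtP: "Xt * P = Xt"
proof -
  have "Xt * P = ((Xt * X) * Si) * Xt" unfolding P_def' by (simp add: msimps)
  thus ?thesis using XtX_inv Xt by simp
qed

lemma PP: "P * P = P"
proof -
  have "P * P = (P * X) * (Si * Xt)" by (simp add: msimps P_def')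
  thus ?thesis unfolding PX by (simp add: P_def')
qed

lemma P_sym: "transpose_mat P = P"
proof -
  have "transpose_mat P = transpose_mat (Si * Xt) * transpose_mat X"
    unfolding P_def' using transpose_mult[OF X, of "Si * Xt" T] Si Xt by simp
  also have "\<dots> = (transpose_mat Xt * transpose_mat Si) * transpose_mat X"
    using transpose_mult[OF Si Xt] by simp
  also have "\<dots> = X * (Si * Xt)" unfolding Si_sym Xt_def using X Si by simp
  finally show ?thesis unfolding P_def' .
qed

end


context thm9 begin

definition "IG = 1\<^sub>m T - G"
definition "Gi = mat_inv IG"
definition "IPG = 1\<^sub>m T - P * G"
definition "Q = mat_inv IPG"
definition "IGP = 1\<^sub>m T - G * P"
definition "R = mat_inv IGP"
definition "S = mat_inv (Xt * IG * X)"

lemma IG: "IG \<in> carrier_mat T T" unfolding IG_def using G by (simp add: minus_carrier_mat)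
lemma dIG[simp]: "dim_row IG = T" "dim_col IG = T" using IG by auto
lemma IPG: "IPG \<in> carrier_mat T T" unfolding IPG_def using G P by (simp add: minus_carrier_mat)
lemma dIPG[simp]: "dim_row IPG = T" "dim_col IPG = T" using IPG by auto
lemma IGP: "IGP \<in> carrier_mat T T" unfolding IGP_def using G P by (simp add: minus_carrier_mat)
lemma dIGP[simp]: "dim_row IGP = T" "dim_col IGP = T" using IGP by auto

lemma small0: assumes w: "w \<in> carrier_vec n" and b: "w \<bullet> w \<le> (1-c) * (w \<bullet> w)"
  shows "w = 0\<^sub>v n"
proof -
  have "c * (w \<bullet> w) \<le> 0" using b by (simp add: algebra_simps)
  hence "w \<bullet> w \<le> 0" using c0 by (simp add: mult_le_0_iff)
  hence "w \<bullet> w = 0" using sp_self_ge0[of w] by simp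
  thus ?thesis using sp_self_eq0[OF w] by simp
qed

lemma mv_minus: fixes A :: "real mat" assumes A: "A \<in> carrier_mat T T" and v: "v \<in> carrier_vec T"
  shows "(1\<^sub>m T - A) *\<^sub>v v = v - A *\<^sub>v v"
  using minus_mult_distrib_mat_vec[OF one_carrier_mat A v] v by simp

lemma vminus0: fixes a b :: "real vec" assumes a: "a \<in> carrier_vec n" and b: "b \<in> carrier_vec n"
  and z: "a - b = 0\<^sub>v n" shows "a = b"
proof (rule eq_vecI)
  fix i assume i: "i < dim_vec b"
  have "(a - b) $ i = 0" using z i b by simp
  thus "a $ i = b $ i" using i a b by simp
qed (use a b in auto)

lemma P_self: assumes x: "x \<in> carrier_vec T" and y: "y \<in> carrier_vec T"
  shows "x \<bullet> (P *\<^sub>v y) = (P *\<^sub>v x) \<bullet> y"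
  using tsym[OF P y x] P_sym by simp

lemma PPv: "v \<in> carrier_vec T \<Longrightarrow> P *\<^sub>v (P *\<^sub>v v) = P *\<^sub>v v"
  using PP P by (metis assoc_mult_mat_vec)

lemma IPG_ker: assumes v: "v \<in> carrier_vec T" and z: "IPG *\<^sub>v v = 0\<^sub>v T" shows "v = 0\<^sub>v T"
proof -
  have Gv: "G *\<^sub>v v \<in> carrier_vec T" using G v by simp
  have "(P * G) *\<^sub>v v = P *\<^sub>v (G *\<^sub>v v)" using P G v by simp
  hence "v - P *\<^sub>v (G *\<^sub>v v) = 0\<^sub>v T" using z mv_minus[of "P * G" v] P G v unfolding IPG_def by simp
  hence e: "v = P *\<^sub>v (G *\<^sub>v v)" using vminus0[OF v] P Gv by simp
  have Pv: "P *\<^sub>v v = v" using PPv[OF Gv] e by simp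
  have "v \<bullet> v = v \<bullet> (P *\<^sub>v (G *\<^sub>v v))" using e by simp
  also have "\<dots> = (P *\<^sub>v v) \<bullet> (G *\<^sub>v v)" using P_self[OF v Gv] .
  also have "\<dots> = v \<bullet> (G *\<^sub>v v)" using Pv by simp
  also have "\<dots> \<le> (1-c) * (v \<bullet> v)" using Gq[OF v] by simp
  finally show ?thesis using small0[OF v] by simp
qed

lemma IG_ker: assumes v: "v \<in> carrier_vec T" and z: "IG *\<^sub>v v = 0\<^sub>v T" shows "v = 0\<^sub>v T"
proof -
  have Gv: "G *\<^sub>v v \<in> carrier_vec T" using G v by simp
  have "v - G *\<^sub>v v = 0\<^sub>v T" using z mv_minus[OF G v] unfolding IG_def by simp
  hence e: "v = G *\<^sub>v v" using vminus0[OF v Gv] by simp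
  have "v \<bullet> v = v \<bullet> (G *\<^sub>v v)" using e by simp
  also have "\<dots> \<le> (1-c) * (v \<bullet> v)" using Gq[OF v] by simp
  finally show ?thesis using small0[OF v] by simp
qed

lemma IGP_ker: assumes v: "v \<in> carrier_vec T" and z: "IGP *\<^sub>v v = 0\<^sub>v T" shows "v = 0\<^sub>v T"
proof -
  define w where "w = P *\<^sub>v v"
  have w: "w \<in> carrier_vec T" using P v w_def by simp
  have GPv: "(G * P) *\<^sub>v v = G *\<^sub>v w" using G P v w_def by simp
  have "v - G *\<^sub>v w = 0\<^sub>v T" using z mv_minus[of "G * P" v] G P v GPv unfolding IGP_def by simp
  hence e: "v = G *\<^sub>v w" using vminus0[OF v] G w by simp
  have "IPG *\<^sub>v w = w - P *\<^sub>v (G *\<^sub>v w)"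
    using mv_minus[of "P * G" w] P G w unfolding IPG_def by simp
  also have "P *\<^sub>v (G *\<^sub>v w) = w" using e w_def by simp
  finally have "IPG *\<^sub>v w = 0\<^sub>v T" using w by simp
  hence "w = 0\<^sub>v T" using IPG_ker[OF w] by simp
  hence "G *\<^sub>v w = 0\<^sub>v T" using G by (intro eq_vecI) auto
  thus ?thesis using e by simp
qed

lemma S0: "Xt * IG * X \<in> carrier_mat K K" using Xt IG X by simp

lemma S0_ker: assumes b: "b \<in> carrier_vec K" and z: "(Xt * IG * X) *\<^sub>v b = 0\<^sub>v K" shows "b = 0\<^sub>v K"
proof -
  define u where "u = X *\<^sub>v b"
  have u: "u \<in> carrier_vec T" using X b u_def by simp
  have Gu: "G *\<^sub>v u \<in> carrier_vec T" using G u by simp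
  have "0 = b \<bullet> ((Xt * IG * X) *\<^sub>v b)" using z b by simp
  also have "\<dots> = b \<bullet> (Xt *\<^sub>v (IG *\<^sub>v u))" using b u_def by (simp add: msimps)
  also have "\<dots> = u \<bullet> (IG *\<^sub>v u)"
    using tsym[OF Xt, of "IG *\<^sub>v u" b] IG u b unfolding Xt_def u_def by simp
  also have "\<dots> = u \<bullet> (u - G *\<^sub>v u)" using mv_minus[OF G u] unfolding IG_def by simp
  also have "\<dots> = u \<bullet> u - u \<bullet> (G *\<^sub>v u)" using scalar_prod_minus_distrib[OF u u Gu] .
  finally have "u \<bullet> u \<le> (1-c) * (u \<bullet> u)" using Gq[OF u] by simp
  hence "u = 0\<^sub>v T" using small0[OF u] by simp
  thus ?thesis using Xinj[OF b] u_def by simp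
qed

lemma IG_inv: "invertible_mat IG \<and> Gi \<in> carrier_mat T T \<and> IG * Gi = 1\<^sub>m T \<and> Gi * IG = 1\<^sub>m T"
  using ker_inv[OF IG] IG_ker unfolding Gi_def by blast
lemma IPG_inv: "invertible_mat IPG \<and> Q \<in> carrier_mat T T \<and> IPG * Q = 1\<^sub>m T \<and> Q * IPG = 1\<^sub>m T"
  using ker_inv[OF IPG] IPG_ker unfolding Q_def by blast
lemma IGP_inv: "invertible_mat IGP \<and> R \<in> carrier_mat T T \<and> IGP * R = 1\<^sub>m T \<and> R * IGP = 1\<^sub>m T"
  using ker_inv[OF IGP] IGP_ker unfolding R_def by blast
lemma S0_inv: "invertible_mat (Xt * IG * X) \<and> S \<in> carrier_mat K K \<and> (Xt * IG * X) * S = 1\<^sub>m K \<and> S * (Xt * IG * X) = 1\<^sub>m K"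
  using ker_inv[OF S0] S0_ker unfolding S_def by blast

lemma dGi[simp]: "dim_row Gi = T" "dim_col Gi = T" using IG_inv by auto
lemma dQ[simp]: "dim_row Q = T" "dim_col Q = T" using IPG_inv by auto
lemma dR[simp]: "dim_row R = T" "dim_col R = T" using IGP_inv by auto
lemma dS[simp]: "dim_row S = K" "dim_col S = K" using S0_inv by auto

end


lemma canc: fixes A B Z :: "real mat"
  assumes "A * B = 1\<^sub>m n" "dim_col A = n" "dim_row B = n" "dim_col B = n" "dim_row Z = n"
  shows "A * (B * Z) = Z"
proof -
  have "A * (B * Z) = (A * B) * Z" by (rule assoc'[symmetric]) (use assms in auto)
  also have "\<dots> = Z" unfolding assms(1) using assms(5) by simp
  finally show ?thesis .
qed

context thm9 begin

lemma c_Gi_IG: "dim_row Z = T \<Longrightarrow> Gi * (IG * Z) = Z" using canc[of Gi IG T Z] IG_inv by simp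
lemma c_IG_Gi: "dim_row Z = T \<Longrightarrow> IG * (Gi * Z) = Z" using canc[of IG Gi T Z] IG_inv by simp
lemma c_Q_IPG: "dim_row Z = T \<Longrightarrow> Q * (IPG * Z) = Z" using canc[of Q IPG T Z] IPG_inv by simp
lemma c_IPG_Q: "dim_row Z = T \<Longrightarrow> IPG * (Q * Z) = Z" using canc[of IPG Q T Z] IPG_inv by simp
lemma c_R_IGP: "dim_row Z = T \<Longrightarrow> R * (IGP * Z) = Z" using canc[of R IGP T Z] IGP_inv by simp
lemma c_IGP_R: "dim_row Z = T \<Longrightarrow> IGP * (R * Z) = Z" using canc[of IGP R T Z] IGP_inv by simp
lemma c_Si: "dim_row Z = K \<Longrightarrow> Si * (Xt * (X * Z)) = Z"
  using canc[of Si "Xt * X" K Z] XtX_inv by (simp add: assoc')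
lemma c_Si': "dim_row Z = K \<Longrightarrow> Xt * (X * (Si * Z)) = Z"
  using canc[of "Xt * X" Si K Z] XtX_inv by (simp add: assoc')
lemma c_S: "dim_row Z = K \<Longrightarrow> S * (Xt * (IG * (X * Z))) = Z"
  using canc[of S "Xt * IG * X" K Z] S0_inv by (simp add: assoc')
lemma c_S': "dim_row Z = K \<Longrightarrow> Xt * (IG * (X * (S * Z))) = Z"
  using canc[of "Xt * IG * X" S K Z] S0_inv by (simp add: assoc')

lemmas cancs = c_Gi_IG c_IG_Gi c_Q_IPG c_IPG_Q c_R_IGP c_IGP_R c_Si c_Si' c_S c_S'

lemma c_Gi_IG0: "Gi * IG = 1\<^sub>m T" using IG_inv by simp
lemma c_IG_Gi0: "IG * Gi = 1\<^sub>m T" using IG_inv by simp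
lemma c_Q_IPG0: "Q * IPG = 1\<^sub>m T" using IPG_inv by simp
lemma c_IPG_Q0: "IPG * Q = 1\<^sub>m T" using IPG_inv by simp
lemma c_R_IGP0: "R * IGP = 1\<^sub>m T" using IGP_inv by simp
lemma c_IGP_R0: "IGP * R = 1\<^sub>m T" using IGP_inv by simp
lemma c_Si0: "Si * (Xt * X) = 1\<^sub>m K" using XtX_inv by simp
lemma c_Si0': "Xt * (X * Si) = 1\<^sub>m K" using XtXSi .
lemma c_S0: "S * (Xt * (IG * X)) = 1\<^sub>m K" using S0_inv by (simp add: assoc')
lemma c_S0': "Xt * (IG * (X * S)) = 1\<^sub>m K" using S0_inv by (simp add: assoc')

lemmas cancs0 = c_Gi_IG0 c_IG_Gi0 c_Q_IPG0 c_IPG_Q0 c_R_IGP0 c_IGP_R0 c_Si0 c_Si0' c_S0 c_S0'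

definition "PGm = X * (S * (Xt * IG))"
definition "MG = 1\<^sub>m T - PGm"
definition "H = 1\<^sub>m T + Gi * (G * M)"
definition "N = IG * MG"

lemma dPGm[simp]: "dim_row PGm = T" "dim_col PGm = T" unfolding PGm_def by simp_all
lemma dMG[simp]: "dim_row MG = T" "dim_col MG = T" unfolding MG_def by simp_all
lemma dH[simp]: "dim_row H = T" "dim_col H = T" unfolding H_def by simp_all
lemma dN[simp]: "dim_row N = T" "dim_col N = T" unfolding N_def by simp_all

lemma PGm_eq: "projPG X G = PGm"
  unfolding projPG_def dX Xt_def[symmetric] IG_def[symmetric] S_def[symmetric] PGm_def
  by (simp add: assoc')
lemma MG_eq: "projMG X G = MG" unfolding projMG_def MG_def PGm_eq by simp
lemma H_eq: "1\<^sub>m T + AG G * projM X = H"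
  unfolding H_def AG_def M_def[symmetric] dG IG_def[symmetric] Gi_def[symmetric] by (simp add: assoc')

end


lemma ent: "A = B \<Longrightarrow> A $$ (i,j) = B $$ (i,j)" by simp

context thm9 begin

lemma H_fac: "H = Gi * IGP"
proof -
  have a: "Gi - Gi * G = 1\<^sub>m T" using c_Gi_IG0 unfolding IG_def by (simp add: md1)
  have l: "H = 1\<^sub>m T + (Gi * G - Gi * (G * P))" unfolding H_def M_def' by (simp add: md1)
  have r: "Gi * IGP = Gi - Gi * (G * P)" unfolding IGP_def by (simp add: md1)
  show ?thesis unfolding l r
  proof (rule eq_matI)
    fix i j assume i: "i < dim_row (Gi - Gi * (G * P))" and j: "j < dim_col (Gi - Gi * (G * P))"
    show "(1\<^sub>m T + (Gi * G - Gi * (G * P))) $$ (i, j) = (Gi - Gi * (G * P)) $$ (i, j)"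
      using ent[OF a, of i j] i j by simp
  qed simp_all
qed

definition "Hi = R * IG"
lemma dHi[simp]: "dim_row Hi = T" "dim_col Hi = T" unfolding Hi_def by simp_all

lemma H_inv: "invertible_mat H \<and> mat_inv H = Hi \<and> H * Hi = 1\<^sub>m T \<and> Hi * H = 1\<^sub>m T"
proof -
  have "H * Hi = 1\<^sub>m T" unfolding H_fac Hi_def by (simp add: msimps cancs cancs0)
  moreover have "Hi \<in> carrier_mat T T" unfolding Hi_def by (rule carrier_matI) simp_all
  moreover have "H \<in> carrier_mat T T" by (rule carrier_matI) simp_all
  ultimately show ?thesis using inv_unique[of H T Hi] by blast
qed

lemma e1: "Xt * (G * X) = Xt * X - Xt * (IG * X)"
proof -
  have a: "Xt * (IG * X) = Xt * X - Xt * (G * X)" unfolding IG_def by (simp add: msimps)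
  show ?thesis unfolding a
  proof (rule eq_matI)
    fix i j assume i: "i < dim_row (Xt * X - (Xt * X - Xt * (G * X)))" and j: "j < dim_col (Xt * X - (Xt * X - Xt * (G * X)))"
    show "(Xt * (G * X)) $$ (i, j) = (Xt * X - (Xt * X - Xt * (G * X))) $$ (i, j)" using i j by simp
  qed simp_all
qed

lemma e2: "Xt * (G * P) = Xt - Xt * (IG * (X * (Si * Xt)))"
proof -
  have "Xt * (G * P) = (Xt * (G * X)) * (Si * Xt)" unfolding P_def' by (simp add: msimps)
  also have "\<dots> = (Xt * X - Xt * (IG * X)) * (Si * Xt)" unfolding e1 ..
  also have "\<dots> = Xt - Xt * (IG * (X * (Si * Xt)))" by (simp add: msimps cancs)
  finally show ?thesis .
qed

lemma e3: "S * (Xt * IGP) = Si * Xt"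
proof -
  have a: "Xt * IGP = Xt - Xt * (G * P)" unfolding IGP_def by (simp add: msimps)
  have b: "Xt * IGP = Xt * (IG * (X * (Si * Xt)))" unfolding a e2
  proof (rule eq_matI)
    fix i j assume i: "i < dim_row (Xt * (IG * (X * (Si * Xt))))" and j: "j < dim_col (Xt * (IG * (X * (Si * Xt))))"
    show "(Xt - (Xt - Xt * (IG * (X * (Si * Xt))))) $$ (i, j) = (Xt * (IG * (X * (Si * Xt)))) $$ (i, j)"
      using i j by simp
  qed simp_all
  show ?thesis unfolding b by (simp add: cancs)
qed

lemma k1: "PGm * (Gi * IGP) = P" unfolding PGm_def by (simp add: msimps cancs e3 P_def')

lemma NH: "N * H = M"
proof -
  have "N * H = IG * (MG * (Gi * IGP))" unfolding N_def H_fac by (simp add: msimps)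
  also have "MG * (Gi * IGP) = Gi * IGP - P" unfolding MG_def by (simp add: md2 k1)
  also have "IG * (Gi * IGP - P) = IGP - IG * P" by (simp add: md1 cancs)
  also have "\<dots> = (1\<^sub>m T - G * P) - (P - G * P)" unfolding IGP_def IG_def by (simp add: md2)
  also have "\<dots> = M" unfolding M_def'
  proof (rule eq_matI)
    fix i j assume i: "i < dim_row (1\<^sub>m T - P)" and j: "j < dim_col (1\<^sub>m T - P)"
    show "(1\<^sub>m T - G * P - (P - G * P)) $$ (i, j) = (1\<^sub>m T - P) $$ (i, j)" using i j by simp
  qed simp_all
  finally show ?thesis .
qed

lemma N_eq: "N = M * Hi"
proof -
  have "N = N * (H * Hi)" using H_inv by simp
  also have "\<dots> = (N * H) * Hi" by (rule assoc'[symmetric]) simp_all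
  finally show ?thesis unfolding NH .
qed

lemma iid: "S * (Xt * IG) = Si * (Xt * Hi)"
proof -
  have "S * (Xt * IG) = S * (Xt * IG) * (H * Hi)" using H_inv by simp
  also have "\<dots> = (S * (Xt * (IG * (Gi * IGP)))) * Hi" unfolding H_fac by (simp add: msimps)
  also have "\<dots> = Si * (Xt * Hi)" by (simp add: cancs e3 msimps)
  finally show ?thesis .
qed

lemma c_PX: "dim_row Z = K \<Longrightarrow> P * (X * Z) = X * Z"
proof -
  assume z: "dim_row Z = K"
  have "P * (X * Z) = (P * X) * Z" using z by (simp add: assoc')
  thus ?thesis unfolding PX .
qed

lemma PG_eq: "PGm = Q * (P * IG)"
proof -
  have a: "IPG * PGm = PGm - P * (G * PGm)" unfolding IPG_def by (simp add: md2 msimps)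
  have b: "P * (IG * PGm) = PGm - P * (G * PGm)" unfolding IG_def
    by (simp add: md2 md1 msimps) (simp add: PGm_def c_PX)
  have c: "P * (IG * PGm) = P * IG" unfolding PGm_def P_def' by (simp add: msimps cancs)
  have "IPG * PGm = P * IG" using a b c by simp
  hence "Q * (IPG * PGm) = Q * (P * IG)" by simp
  thus ?thesis by (simp add: cancs)
qed

lemma MG_eq2: "MG = Q * M"
proof -
  have a: "Q - Q * (P * G) = 1\<^sub>m T" using c_Q_IPG0 unfolding IPG_def by (simp add: md1)
  have l: "MG = 1\<^sub>m T - (Q * P - Q * (P * G))" unfolding MG_def PG_eq IG_def by (simp add: md1)
  have r: "Q * M = Q - Q * P" unfolding M_def' by (simp add: md1)
  show ?thesis unfolding l r
  proof (rule eq_matI)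
    fix i j assume i: "i < dim_row (Q - Q * P)" and j: "j < dim_col (Q - Q * P)"
    show "(1\<^sub>m T - (Q * P - Q * (P * G))) $$ (i, j) = (Q - Q * P) $$ (i, j)"
      using ent[OF a, of i j] i j by simp
  qed simp_all
qed

end


lemma amgm2: fixes x y :: "real vec" assumes x: "x \<in> carrier_vec n" and y: "y \<in> carrier_vec n"
  shows "2 * (x \<bullet> y) \<le> x \<bullet> x + y \<bullet> y"
proof -
  have xy: "x - y \<in> carrier_vec n" using x y by simp
  have "(x - y) \<bullet> (x - y) = x \<bullet> (x - y) - y \<bullet> (x - y)" using minus_scalar_prod_distrib[OF x y xy] .
  also have "x \<bullet> (x - y) = x \<bullet> x - x \<bullet> y" using scalar_prod_minus_distrib[OF x x y] .
  also have "y \<bullet> (x - y) = y \<bullet> x - y \<bullet> y" using scalar_prod_minus_distrib[OF y x y] .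
  also have "y \<bullet> x = x \<bullet> y" using comm_scalar_prod[OF y x] .
  finally have "(x - y) \<bullet> (x - y) = x \<bullet> x - x \<bullet> y - (x \<bullet> y - y \<bullet> y)" .
  thus ?thesis using sp_self_ge0[of "x - y"] by linarith
qed

context thm9 begin

lemma Qc: "Q \<in> carrier_mat T T" using IPG_inv by simp

lemma quad: assumes u: "u \<in> carrier_vec T" and Pu: "P *\<^sub>v u = 0\<^sub>v T"
  shows "c * (u \<bullet> u) \<le> u \<bullet> (IG *\<^sub>v (Q *\<^sub>v u)) \<and> c * (u \<bullet> (IG *\<^sub>v (Q *\<^sub>v u))) \<le> 2 * (u \<bullet> u)"
proof -
  define z where "z = Q *\<^sub>v u"
  have z: "z \<in> carrier_vec T" unfolding z_def by (rule carrier_vecI) simp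
  define y where "y = G *\<^sub>v z"
  have y: "y \<in> carrier_vec T" unfolding y_def by (rule carrier_vecI) simp
  define p where "p = P *\<^sub>v y"
  have p: "p \<in> carrier_vec T" unfolding p_def by (rule carrier_vecI) simp
  have "IPG *\<^sub>v z = (IPG * Q) *\<^sub>v u" using u unfolding z_def by (simp add: mv_assoc')
  hence "IPG *\<^sub>v z = u" using c_IPG_Q0 u by simp
  moreover have "IPG *\<^sub>v z = z - p" unfolding IPG_def p_def y_def
    using mv_minus[OF mult_carrier_mat[OF P G] z] z by (simp add: mv_assoc')
  ultimately have uzp: "u = z - p" by simp
  have "P *\<^sub>v u = P *\<^sub>v z - P *\<^sub>v p" unfolding uzp using mult_minus_distrib_mat_vec[OF P z p] .
  also have "P *\<^sub>v p = p" unfolding p_def using PPv[OF y] .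
  finally have "P *\<^sub>v z - p = 0\<^sub>v T" using Pu by simp
  hence Pz: "P *\<^sub>v z = p" using vminus0[OF mult_mat_vec_carrier[OF P z] p] by simp
  have IGz: "IG *\<^sub>v z = z - y" unfolding IG_def y_def using mv_minus[OF G z] .
  have yz: "y \<bullet> y \<le> (1-c)^2 * (z \<bullet> z)" unfolding y_def using Gb[OF z] .
  have zGz: "z \<bullet> y \<le> (1-c) * (z \<bullet> z) \<and> - (z \<bullet> y) \<le> (1-c) * (z \<bullet> z)" unfolding y_def using Gq[OF z] .
  have "P *\<^sub>v (IG *\<^sub>v z) = P *\<^sub>v z - P *\<^sub>v y" unfolding IGz using mult_minus_distrib_mat_vec[OF P z y] .
  hence PIGz: "P *\<^sub>v (IG *\<^sub>v z) = 0\<^sub>v T" unfolding Pz p_def[symmetric] using p by simp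
  have IGzc: "IG *\<^sub>v z \<in> carrier_vec T" by (rule carrier_vecI) simp
  define q where "q = u \<bullet> (IG *\<^sub>v z)"
  have "q = z \<bullet> (IG *\<^sub>v z) - p \<bullet> (IG *\<^sub>v z)" unfolding q_def uzp
    using minus_scalar_prod_distrib[OF z p IGzc] .
  also have "p \<bullet> (IG *\<^sub>v z) = z \<bullet> (P *\<^sub>v (IG *\<^sub>v z))" unfolding Pz[symmetric] using P_self[OF z IGzc] by simp
  also have "\<dots> = 0" unfolding PIGz using z by simp
  finally have q: "q = z \<bullet> z - z \<bullet> y" unfolding IGz using scalar_prod_minus_distrib[OF z z y] by simp
  have "u \<bullet> u = z \<bullet> u - p \<bullet> u" using minus_scalar_prod_distrib[OF z p u] uzp by simp
  also have "p \<bullet> u = z \<bullet> (P *\<^sub>v u)" unfolding Pz[symmetric] using P_self[OF z u] by simp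
  also have "\<dots> = 0" unfolding Pu using z by simp
  finally have uu: "u \<bullet> u = z \<bullet> u" by simp
  have "2 * (z \<bullet> u) \<le> z \<bullet> z + u \<bullet> u" using amgm2[OF z u] .
  hence uz: "u \<bullet> u \<le> z \<bullet> z" using uu by simp
  have "z \<bullet> u = z \<bullet> z - z \<bullet> p" unfolding uzp using scalar_prod_minus_distrib[OF z z p] .
  also have "z \<bullet> p = p \<bullet> y" unfolding p_def using P_self[OF z y] Pz p_def by simp
  finally have zz: "z \<bullet> z = u \<bullet> u + p \<bullet> y" using uu by simp
  have Py: "p \<bullet> p = p \<bullet> y" unfolding p_def using P_self[OF p y] p_def PPv[OF y] by simp
  have "2 * (p \<bullet> y) \<le> p \<bullet> p + y \<bullet> y" using amgm2[OF p y] .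
  hence "p \<bullet> y \<le> y \<bullet> y" using Py by simp
  hence "z \<bullet> z \<le> u \<bullet> u + (1-c)^2 * (z \<bullet> z)" using zz yz by simp
  hence "c * (2 - c) * (z \<bullet> z) \<le> u \<bullet> u" by (simp add: power2_eq_square algebra_simps)
  moreover have "c * (z \<bullet> z) \<le> c * (2 - c) * (z \<bullet> z)"
  proof -
    have "c \<le> c * (2 - c)" using c0 c1 by (simp add: algebra_simps)
    thus ?thesis using sp_self_ge0[of z] by (intro mult_right_mono) auto
  qed
  ultimately have czu: "c * (z \<bullet> z) \<le> u \<bullet> u" by simp
  have low: "c * (u \<bullet> u) \<le> q"
  proof -
    have "c * (u \<bullet> u) \<le> c * (z \<bullet> z)" using uz c0 by simp
    also have "\<dots> \<le> q" using q zGz by (simp add: algebra_simps)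
    finally show ?thesis .
  qed
  have up: "c * q \<le> 2 * (u \<bullet> u)"
  proof -
    have e: "(1-c)*(z \<bullet> z) = z \<bullet> z - c*(z \<bullet> z)" by (simp add: algebra_simps)
    have "0 \<le> c*(z \<bullet> z)" using c0 sp_self_ge0[of z] by simp
    hence "q \<le> 2 * (z \<bullet> z)" using q zGz e by linarith
    hence "c * q \<le> c * (2 * (z \<bullet> z))" using c0 by simp
    also have "\<dots> \<le> 2 * (u \<bullet> u)" using czu by simp
    finally show ?thesis .
  qed
  show ?thesis using low up unfolding q_def z_def by simp
qed

end


context thm9 begin

lemma XtN0: "Xt * N = 0\<^sub>m K T"
proof -
  have a: "Xt * N = Xt * IG - Xt * IG" unfolding N_def MG_def PGm_def by (simp add: msimps cancs)
  show ?thesis unfolding a by (rule eq_matI) simp_all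
qed

lemma PGmc: "PGm \<in> carrier_mat T T" by (rule carrier_matI) simp_all
lemma MGc: "MG \<in> carrier_mat T T" by (rule carrier_matI) simp_all
lemma Nc: "N \<in> carrier_mat T T" by (rule carrier_matI) simp_all

lemma Nq: assumes v: "v \<in> carrier_vec T" shows "0 \<le> v \<bullet> (N *\<^sub>v v)"
proof -
  define w where "w = MG *\<^sub>v v"
  define b where "b = (S * (Xt * IG)) *\<^sub>v v"
  have w: "w \<in> carrier_vec T" unfolding w_def by (rule carrier_vecI) simp
  have b: "b \<in> carrier_vec K" unfolding b_def by (rule carrier_vecI) simp
  have Xb: "X *\<^sub>v b \<in> carrier_vec T" by (rule carrier_vecI) simp
  have IGw: "IG *\<^sub>v w \<in> carrier_vec T" by (rule carrier_vecI) simp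
  have Gw: "G *\<^sub>v w \<in> carrier_vec T" by (rule carrier_vecI) simp
  have "PGm *\<^sub>v v = X *\<^sub>v b" unfolding PGm_def b_def using v by (simp add: mv_assoc')
  moreover have "w = v - PGm *\<^sub>v v" unfolding w_def MG_def using mv_minus[OF PGmc v] .
  ultimately have wv: "w = v - X *\<^sub>v b" by simp
  have vw: "v = w + X *\<^sub>v b"
  proof (rule eq_vecI)
    fix i assume i: "i < dim_vec (w + X *\<^sub>v b)"
    hence iT: "i < T" using w by simp
    show "v $ i = (w + X *\<^sub>v b) $ i" unfolding wv using iT v by simp
  qed (use v w in simp)
  have Nv: "N *\<^sub>v v = IG *\<^sub>v w" unfolding N_def w_def using v by (simp add: mv_assoc')
  have "v \<bullet> (N *\<^sub>v v) = w \<bullet> (IG *\<^sub>v w) + (X *\<^sub>v b) \<bullet> (IG *\<^sub>v w)"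
    unfolding Nv by (subst vw) (rule add_scalar_prod_distrib[OF w Xb IGw])
  also have "(X *\<^sub>v b) \<bullet> (IG *\<^sub>v w) = b \<bullet> (Xt *\<^sub>v (IG *\<^sub>v w))"
    using tsym[OF Xt IGw b] unfolding Xt_def by simp
  also have "Xt *\<^sub>v (IG *\<^sub>v w) = (Xt * N) *\<^sub>v v" unfolding N_def w_def using v by (simp add: mv_assoc')
  also have "\<dots> = 0\<^sub>v K" unfolding XtN0 using v by (intro eq_vecI) auto
  also have "w \<bullet> (IG *\<^sub>v w) = w \<bullet> w - w \<bullet> (G *\<^sub>v w)"
    unfolding IG_def using mv_minus[OF G w] scalar_prod_minus_distrib[OF w w Gw] by simp
  finally have e: "v \<bullet> (N *\<^sub>v v) = w \<bullet> w - w \<bullet> (G *\<^sub>v w)" using b by simp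
  have "w \<bullet> (G *\<^sub>v w) \<le> (1-c) * (w \<bullet> w)" using Gq[OF w] by simp
  moreover have "(1-c) * (w \<bullet> w) \<le> w \<bullet> w" using c0 sp_self_ge0[of w] by (simp add: algebra_simps)
  ultimately show ?thesis using e by simp
qed

lemma psdN: "psd (N + transpose_mat N)"
  unfolding psd_def
proof (intro conjI ballI)
  show "square_mat (N + transpose_mat N)" by simp
  fix v :: "real vec" assume "v \<in> carrier_vec (dim_row (N + transpose_mat N))"
  hence v: "v \<in> carrier_vec T" by simp
  have Ntc: "transpose_mat N \<in> carrier_mat T T" using Nc by simp
  have "(N + transpose_mat N) *\<^sub>v v = N *\<^sub>v v + transpose_mat N *\<^sub>v v"
    using add_mult_distrib_mat_vec[OF Nc Ntc v] .
  hence "v \<bullet> ((N + transpose_mat N) *\<^sub>v v) = v \<bullet> (N *\<^sub>v v) + v \<bullet> (transpose_mat N *\<^sub>v v)"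
    using scalar_prod_add_distrib[OF v, of "N *\<^sub>v v" "transpose_mat N *\<^sub>v v"] Nc Ntc v by simp
  also have "v \<bullet> (transpose_mat N *\<^sub>v v) = (N *\<^sub>v v) \<bullet> v" using tsym[OF Ntc v v] by simp
  also have "\<dots> = v \<bullet> (N *\<^sub>v v)" using comm_scalar_prod[of "N *\<^sub>v v" T v] Nc v by simp
  finally show "0 \<le> v \<bullet> ((N + transpose_mat N) *\<^sub>v v)" using Nq[OF v] by simp
qed

lemma PN0: "P * N = 0\<^sub>m T T"
proof -
  have "P * N = X * (Si * (Xt * N))" unfolding P_def' by (simp add: msimps)
  thus ?thesis unfolding XtN0 by simp
qed

lemma N_MNM: "N = M * (IG * (Q * M))"
proof -
  have "M * N = N - P * N" unfolding M_def' by (simp add: md2)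
  also have "\<dots> = N" unfolding PN0 by (rule eq_matI) simp_all
  finally have MN: "N = M * N" by simp
  have Neq: "IG * (Q * M) = N" unfolding N_def MG_eq2 ..
  show ?thesis unfolding Neq by (rule MN)
qed

lemma M_sym: "transpose_mat M = M"
  unfolding M_def' using transpose_minus[OF one_carrier_mat P] P_sym by simp

lemma PM0: "P * M = 0\<^sub>m T T"
proof -
  have "P * M = P - P * P" unfolding M_def' by (simp add: md1)
  thus ?thesis unfolding PP by (simp) (rule eq_matI, simp_all)
qed

lemma MM: "M * M = M"
proof -
  have "M * M = (1\<^sub>m T - P) * M" by (subst (1) M_def') (rule refl)
  also have "\<dots> = M - P * M" by (simp add: md2)
  finally have "M * M = M - P * M" .
  thus ?thesis unfolding PM0 by simp (rule eq_matI, simp_all)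
qed

lemma rowM: "i < T \<Longrightarrow> row M i = col M i"
  using col_transpose[of i M] M_sym by simp

lemma Ndiag: assumes i: "i < T" shows "N $$ (i,i) = col M i \<bullet> (IG *\<^sub>v (Q *\<^sub>v col M i))"
proof -
  have "N $$ (i,i) = row M i \<bullet> col (IG * (Q * M)) i" using i by (subst N_MNM) simp
  also have "col (IG * (Q * M)) i = IG *\<^sub>v col (Q * M) i" using col_mult2[OF IG _ i, of "Q * M"] Qc M by simp
  also have "col (Q * M) i = Q *\<^sub>v col M i" using col_mult2[OF Qc M i] .
  finally show ?thesis using rowM[OF i] by simp
qed

lemma Mdiag: assumes i: "i < T" shows "col M i \<bullet> col M i = M $$ (i,i)"
proof -
  have "(M * M) $$ (i,i) = row M i \<bullet> col M i" using i by simp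
  thus ?thesis unfolding MM rowM[OF i] by simp
qed

lemma PMcol: assumes i: "i < T" shows "P *\<^sub>v col M i = 0\<^sub>v T"
proof -
  have "P *\<^sub>v col M i = col (P * M) i" using col_mult2[OF P M i] by simp
  thus ?thesis unfolding PM0 using i by (intro eq_vecI) auto
qed

lemma trP: "mat_trace P = real K"
proof -
  have "mat_trace P = mat_trace (X * (Si * Xt))" unfolding P_def' ..
  also have "\<dots> = mat_trace ((Si * Xt) * X)" using trace_comm[OF X, of "Si * Xt"] Si Xt by simp
  also have "(Si * Xt) * X = 1\<^sub>m K" by (simp add: assoc' c_Si0)
  finally show ?thesis unfolding mat_trace_def by simp
qed

lemma trM: "(\<Sum>i<T. col M i \<bullet> col M i) = real T - real K"
proof -
  have "(\<Sum>i<T. col M i \<bullet> col M i) = (\<Sum>i<T. 1 - P $$ (i,i))"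
  proof (rule sum.cong)
    fix i assume "i \<in> {..<T}"
    hence i: "i < T" by simp
    have "M $$ (i,i) = 1 - P $$ (i,i)" unfolding M_def' using i by simp
    thus "col M i \<bullet> col M i = 1 - P $$ (i,i)" using Mdiag[OF i] by simp
  qed simp
  also have "\<dots> = real T - mat_trace P" unfolding mat_trace_def by (simp add: sum_subtractf)
  finally show ?thesis unfolding trP .
qed

lemma trN: "c * (real T - real K) \<le> mat_trace N \<and> c * mat_trace N \<le> 2 * (real T - real K)"
proof -
  have trN: "mat_trace N = (\<Sum>i<T. col M i \<bullet> (IG *\<^sub>v (Q *\<^sub>v col M i)))"
    unfolding mat_trace_def by (simp add: Ndiag)
  have ci: "col M i \<in> carrier_vec T" if "i < T" for i using that M by simp
  have "c * (real T - real K) = (\<Sum>i<T. c * (col M i \<bullet> col M i))" unfolding trM[symmetric]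
    by (simp add: sum_distrib_left)
  also have "\<dots> \<le> mat_trace N" unfolding trN
    by (rule sum_mono) (use quad[OF ci PMcol] in auto)
  finally have 1: "c * (real T - real K) \<le> mat_trace N" .
  have "c * mat_trace N = (\<Sum>i<T. c * (col M i \<bullet> (IG *\<^sub>v (Q *\<^sub>v col M i))))" unfolding trN
    by (simp add: sum_distrib_left)
  also have "\<dots> \<le> (\<Sum>i<T. 2 * (col M i \<bullet> col M i))"
    by (rule sum_mono) (use quad[OF ci PMcol] in auto)
  also have "\<dots> = 2 * (real T - real K)" unfolding trM[symmetric] by (simp add: sum_distrib_left)
  finally show ?thesis using 1 by simp
qed

end


context thm9 begin

lemma part1:
  "invertible_mat (1\<^sub>m T - G) \<and>
   invertible_mat (1\<^sub>m T - projP X * G) \<and>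
   invertible_mat (X\<^sup>T * (1\<^sub>m T - G) * X) \<and>
   invertible_mat (1\<^sub>m T + AG G * projM X) \<and>
   (1\<^sub>m T - G) * projMG X G = projM X * mat_inv (1\<^sub>m T + AG G * projM X) \<and>
   projPG X G = mat_inv (1\<^sub>m T - projP X * G) * projP X * (1\<^sub>m T - G) \<and>
   projMG X G = mat_inv (1\<^sub>m T - projP X * G) * projM X \<and>
   (\<forall>y \<in> carrier_vec T.
      mat_inv (X\<^sup>T * (1\<^sub>m T - G) * X) * X\<^sup>T * (1\<^sub>m T - G) *\<^sub>v y =
      mat_inv (X\<^sup>T * X) * X\<^sup>T * mat_inv (1\<^sub>m T + AG G * projM X) *\<^sub>v y) \<and>
   psd ((1\<^sub>m T - G) * projMG X G + (projMG X G)\<^sup>T * (1\<^sub>m T - G\<^sup>T))"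
proof -
  have tIG: "1\<^sub>m T - G\<^sup>T = IG\<^sup>T" unfolding IG_def using transpose_minus[OF one_carrier_mat G] by simp
  have tN: "MG\<^sup>T * IG\<^sup>T = N\<^sup>T" unfolding N_def using transpose_mult[OF IG MGc] by simp
  have Hm: "mat_inv H = Hi" using H_inv by simp
  have H_eq': "1\<^sub>m T + AG G * M = H" using H_eq unfolding M_def[symmetric] .
  have iy: "S * Xt * IG = Si * Xt * Hi" using iid by (simp add: assoc')
  show ?thesis
    unfolding H_eq M_def[symmetric] H_eq' Xt_def[symmetric] IG_def[symmetric] P_def[symmetric] M_def[symmetric]
      IPG_def[symmetric] Q_def[symmetric] S_def[symmetric] Si_def[symmetric] PGm_eq MG_eq
      tIG tN Hm N_def[symmetric] iy
    using IG_inv IPG_inv S0_inv H_inv N_eq PG_eq MG_eq2 psdN by (simp add: assoc')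
qed

lemma part2:
  "c / 2 < mat_trace ((1\<^sub>m T - G) * projMG X G) / real (T - K) \<and>
   mat_trace ((1\<^sub>m T - G) * projMG X G) / real (T - K) < 2 / c + 1"
proof -
  have e: "(1\<^sub>m T - G) * projMG X G = N" unfolding N_def IG_def MG_eq ..
  have d: "real (T - K) = real T - real K" using KT by simp
  have pos: "real T - real K > 0" using KT by simp
  define t where "t = mat_trace N"
  have b1: "c * (real T - real K) \<le> t" and b2: "c * t \<le> 2 * (real T - real K)" using trN unfolding t_def by auto
  have l: "c \<le> t / (real T - real K)" using b1 pos by (simp add: field_simps)
  have "t \<le> 2 / c * (real T - real K)" using b2 c0 by (simp add: field_simps)
  hence u: "t / (real T - real K) \<le> 2 / c" using pos by (simp add: field_simps)
  have "c / 2 < c" using c0 by simp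
  thus ?thesis unfolding e d t_def[symmetric] using l u by linarith
qed

end

lemma P1: fixes c :: real assumes c: "0 < c" "c < 1"
  and h: "X \<in> carrier_mat T K \<and> full_col_rank X \<and> K < T \<and> G \<in> carrier_mat T T \<and> op_norm G < 1 - c"
  shows "invertible_mat (1\<^sub>m T - G) \<and>
           invertible_mat (1\<^sub>m T - projP X * G) \<and>
           invertible_mat (X\<^sup>T * (1\<^sub>m T - G) * X) \<and>
           invertible_mat (1\<^sub>m T + AG G * projM X) \<and>
           (1\<^sub>m T - G) * projMG X G = projM X * mat_inv (1\<^sub>m T + AG G * projM X) \<and>
           projPG X G = mat_inv (1\<^sub>m T - projP X * G) * projP X * (1\<^sub>m T - G) \<and>
           projMG X G = mat_inv (1\<^sub>m T - projP X * G) * projM X \<and>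
           (\<forall>y \<in> carrier_vec T.
              mat_inv (X\<^sup>T * (1\<^sub>m T - G) * X) * X\<^sup>T * (1\<^sub>m T - G) *\<^sub>v y =
              mat_inv (X\<^sup>T * X) * X\<^sup>T * mat_inv (1\<^sub>m T + AG G * projM X) *\<^sub>v y) \<and>
           psd ((1\<^sub>m T - G) * projMG X G + (projMG X G)\<^sup>T * (1\<^sub>m T - G\<^sup>T))"
proof -
  interpret thm9 T K X G c using h c by unfold_locales auto
  show ?thesis by (rule part1)
qed

lemma P2: fixes c :: real assumes c: "0 < c" "c < 1"
  and h: "X \<in> carrier_mat T K \<and> full_col_rank X \<and> K < T \<and> G \<in> carrier_mat T T \<and> op_norm G < 1 - c"
  shows "c / 2 < mat_trace ((1\<^sub>m T - G) * projMG X G) / real (T - K) \<and>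
   mat_trace ((1\<^sub>m T - G) * projMG X G) / real (T - K) < 2 / c + 1"
proof -
  interpret thm9 T K X G c using h c by unfold_locales auto
  show ?thesis by (rule part2)
qed

theorem mainTheorem9:
  fixes c :: real
  assumes c: "0 < c" "c < 1"
  shows "(\<forall>T K (X::real mat) (G::real mat).
           X \<in> carrier_mat T K \<and> full_col_rank X \<and> K < T \<and>
           G \<in> carrier_mat T T \<and> op_norm G < 1 - c \<longrightarrow>
           \<comment> \<open>(i)\<close>
           invertible_mat (1\<^sub>m T - G) \<and>
           invertible_mat (1\<^sub>m T - projP X * G) \<and>
           invertible_mat (X\<^sup>T * (1\<^sub>m T - G) * X) \<and>
           invertible_mat (1\<^sub>m T + AG G * projM X) \<and>
           \<comment> \<open>(ii)\<close>
           (1\<^sub>m T - G) * projMG X G = projM X * mat_inv (1\<^sub>m T + AG G * projM X) \<and>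
           projPG X G = mat_inv (1\<^sub>m T - projP X * G) * projP X * (1\<^sub>m T - G) \<and>
           projMG X G = mat_inv (1\<^sub>m T - projP X * G) * projM X \<and>
           (\<forall>y \<in> carrier_vec T.
              mat_inv (X\<^sup>T * (1\<^sub>m T - G) * X) * X\<^sup>T * (1\<^sub>m T - G) *\<^sub>v y =
              mat_inv (X\<^sup>T * X) * X\<^sup>T * mat_inv (1\<^sub>m T + AG G * projM X) *\<^sub>v y) \<and>
           \<comment> \<open>(iii), first part\<close>
           psd ((1\<^sub>m T - G) * projMG X G + (projMG X G)\<^sup>T * (1\<^sub>m T - G\<^sup>T))) \<and>
         (\<exists>c' C'. 0 < c' \<and> c' < C' \<and>
           (\<forall>T K (X::real mat) (G::real mat).
              X \<in> carrier_mat T K \<and> full_col_rank X \<and> K < T \<and>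
              G \<in> carrier_mat T T \<and> op_norm G < 1 - c \<longrightarrow>
              c' < mat_trace ((1\<^sub>m T - G) * projMG X G) / real (T - K) \<and>
              mat_trace ((1\<^sub>m T - G) * projMG X G) / real (T - K) < C'))"
proof (rule conjI)
  show "\<forall>T K (X::real mat) (G::real mat).
           X \<in> carrier_mat T K \<and> full_col_rank X \<and> K < T \<and>
           G \<in> carrier_mat T T \<and> op_norm G < 1 - c \<longrightarrow>
           invertible_mat (1\<^sub>m T - G) \<and>
           invertible_mat (1\<^sub>m T - projP X * G) \<and>
           invertible_mat (X\<^sup>T * (1\<^sub>m T - G) * X) \<and>
           invertible_mat (1\<^sub>m T + AG G * projM X) \<and>
           (1\<^sub>m T - G) * projMG X G = projM X * mat_inv (1\<^sub>m T + AG G * projM X) \<and>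
           projPG X G = mat_inv (1\<^sub>m T - projP X * G) * projP X * (1\<^sub>m T - G) \<and>
           projMG X G = mat_inv (1\<^sub>m T - projP X * G) * projM X \<and>
           (\<forall>y \<in> carrier_vec T.
              mat_inv (X\<^sup>T * (1\<^sub>m T - G) * X) * X\<^sup>T * (1\<^sub>m T - G) *\<^sub>v y =
              mat_inv (X\<^sup>T * X) * X\<^sup>T * mat_inv (1\<^sub>m T + AG G * projM X) *\<^sub>v y) \<and>
           psd ((1\<^sub>m T - G) * projMG X G + (projMG X G)\<^sup>T * (1\<^sub>m T - G\<^sup>T))"
    using P1[OF c] by blast
next
  show "\<exists>c' C'. 0 < c' \<and> c' < C' \<and>
           (\<forall>T K (X::real mat) (G::real mat).
              X \<in> carrier_mat T K \<and> full_col_rank X \<and> K < T \<and>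
              G \<in> carrier_mat T T \<and> op_norm G < 1 - c \<longrightarrow>
              c' < mat_trace ((1\<^sub>m T - G) * projMG X G) / real (T - K) \<and>
              mat_trace ((1\<^sub>m T - G) * projMG X G) / real (T - K) < C')"
  proof (intro exI conjI)
    show "0 < c / 2" using c by simp
    have "c * c < 1 * 1" using c by (intro mult_strict_mono) auto
    hence "c / 2 < 2 / c" using c by (simp add: field_simps)
    thus "c / 2 < 2 / c + 1" using c by simp
    show "\<forall>T K (X::real mat) (G::real mat).
              X \<in> carrier_mat T K \<and> full_col_rank X \<and> K < T \<and>
              G \<in> carrier_mat T T \<and> op_norm G < 1 - c \<longrightarrow>
              c / 2 < mat_trace ((1\<^sub>m T - G) * projMG X G) / real (T - K) \<and>
              mat_trace ((1\<^sub>m T - G) * projMG X G) / real (T - K) < 2 / c + 1"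
      using P2[OF c] by blast
  qed
qed



end
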